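(* Let $n\ge1$ and $\pi\in S_n$, and set $w=\hat\pi$. The following are equivalent: (a) $\pi\in\mathcal C_n(321)$; (b) $\hat\pi_1=n$ and $N_{2\,\underline{31}}(w)+N_{\underline{14}\,\underline{23}}(w)+N_{\underline{41}\,\underline{32}}(w)-N_{\underline{24}\,\underline{13}}(w)-N_{\underline{31}\,\underline{42}}(w)=0$; (c) $\hat\pi_1=n$ and $N_{\underline{231}}(w)+N_{\underline{23}\,\underline{41}}(w)+N_{\underline{24}\,\underline{31}}(w)+N_{\underline{32}\,\underline{41}}(w)+N_{\underline{14}\,\underline{23}}(w)+N_{\underline{41}\,\underline{32}}(w)-N_{\underline{24}\,\underline{13}}(w)=0$.
   Context: Permutations of $[n]$ are written in one-line notation $\pi=\pi_1\cdots\pi_n$. A permutation contains $321$ if there are $i<j<k$ with $\pi_i>\pi_j>\pi_k$. $\mathcal C_n$ is the set of cyclic permutations of $[n]$ (a single $n$-cycle), and $\mathcal C_n(321)$ those avoiding $321$. The standard cycle notation of $\pi$ writes each cycle with its largest element first, as $(m,\pi(m),\pi^2(m),\dots)$, and lists the cycles in increasing order of their largest elements. $\theta:S_n\to S_n$ sends $\pi$ to the permutation whose one-line notation is the standard cycle notation of $\pi$ with parentheses erased; $\hat\pi=\theta(\pi)$. Pattern counts, for a sequence $w=w_1\cdots w_N$ of distinct integers (all pairs $(i,j)$ below range over $i+2\le j\le N-1$ unless stated otherwise): $N_{2\,\underline{31}}(w)=\#\{(i,j):1\le i<j\le N-1,\ w_{j+1}<w_i<w_j\}$; $N_{\underline{231}}(w)=\#\{i: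 i+2\le N,\ w_{i+2}<w_i<w_{i+1}\}$; $N_{\underline{14}\,\underline{23}}(w)=\#\{(i,j): w_i<w_j<w_{j+1}<w_{i+1}\}$; $N_{\underline{41}\,\underline{32}}(w)=\#\{(i,j): w_{i+1}<w_{j+1}<w_j<w_i\}$; $N_{\underline{24}\,\underline{13}}(w)=\#\{(i,j): w_j<w_i<w_{j+1}<w_{i+1}\}$; $N_{\underline{31}\,\underline{42}}(w)=\#\{(i,j): w_{i+1}<w_{j+1}<w_i<w_j\}$; $N_{\underline{23}\,\underline{41}}(w)=\#\{(i,j): w_{j+1}<w_i<w_{i+1}<w_j\}$; $N_{\underline{24}\,\underline{31}}(w)=\#\{(i,j): w_{j+1}<w_i<w_j<w_{i+1}\}$; $N_{\underline{32}\,\underline{41}}(w)=\#\{(i,j): w_{j+1}<w_{i+1}<w_i<w_j\}$. *)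

theory Defs
  imports "HOL-Combinatorics.Permutations"
begin

(* Permutations of [n] are functions p :: nat => nat with p permutes {1..n};
   the one-line notation is p 1, p 2, ..., p n. *)

definition contains_321 :: "nat \<Rightarrow> (nat \<Rightarrow> nat) \<Rightarrow> bool" where
  "contains_321 n p \<longleftrightarrow>
     (\<exists>i j k. 1 \<le> i \<and> i < j \<and> j < k \<and> k \<le> n \<and> p i > p j \<and> p j > p k)"

definition cyclic_perm :: "nat \<Rightarrow> (nat \<Rightarrow> nat) \<Rightarrow> bool" where
  "cyclic_perm n p \<longleftrightarrow> p permutes {1..n} \<and>
     (\<forall>x\<in>{1..n}. \<forall>y\<in>{1..n}. \<exists>k. (p ^^ k) x = y)"

definition cyc_len :: "(nat \<Rightarrow> nat) \<Rightarrow> nat \<Rightarrow> nat" where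
  "cyc_len p m = (LEAST k. 0 < k \<and> (p ^^ k) m = m)"

definition cycle_list :: "(nat \<Rightarrow> nat) \<Rightarrow> nat \<Rightarrow> nat list" where
  "cycle_list p m = map (\<lambda>k. (p ^^ k) m) [0..<cyc_len p m]"

definition cycle_maxima :: "nat \<Rightarrow> (nat \<Rightarrow> nat) \<Rightarrow> nat set" where
  "cycle_maxima n p = {m \<in> {1..n}. \<forall>k. (p ^^ k) m \<le> m}"

(* theta(p): standard cycle notation with parentheses erased, as a list *)
definition theta :: "nat \<Rightarrow> (nat \<Rightarrow> nat) \<Rightarrow> nat list" where
  "theta n p = concat (map (cycle_list p) (sorted_list_of_set (cycle_maxima n p)))"

(* Pattern counts. The list w = w_1 ... w_N is stored 0-based: w_i = w ! (i-1).
   Pairs (i,j) with i+2 <= j <= N-1 (1-based) become (a,b) with a+2 <= b, b+1 < N. *)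

definition N_2_31 :: "nat list \<Rightarrow> nat" where
  "N_2_31 w = card {(a,b). a < b \<and> b + 1 < length w \<and> w!(b+1) < w!a \<and> w!a < w!b}"

definition N_231 :: "nat list \<Rightarrow> nat" where
  "N_231 w = card {a. a + 2 < length w \<and> w!(a+2) < w!a \<and> w!a < w!(a+1)}"

definition pairs2 :: "nat list \<Rightarrow> (nat \<Rightarrow> nat \<Rightarrow> bool) \<Rightarrow> nat" where
  "pairs2 w P = card {(a,b). a + 2 \<le> b \<and> b + 1 < length w \<and> P a b}"

definition N_14_23 :: "nat list \<Rightarrow> nat" where
  "N_14_23 w = pairs2 w (\<lambda>i j. w!i < w!j \<and> w!j < w!(j+1) \<and> w!(j+1) < w!(i+1))"

definition N_41_32 :: "nat list \<Rightarrow> nat" where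
  "N_41_32 w = pairs2 w (\<lambda>i j. w!(i+1) < w!(j+1) \<and> w!(j+1) < w!j \<and> w!j < w!i)"

definition N_24_13 :: "nat list \<Rightarrow> nat" where
  "N_24_13 w = pairs2 w (\<lambda>i j. w!j < w!i \<and> w!i < w!(j+1) \<and> w!(j+1) < w!(i+1))"

definition N_31_42 :: "nat list \<Rightarrow> nat" where
  "N_31_42 w = pairs2 w (\<lambda>i j. w!(i+1) < w!(j+1) \<and> w!(j+1) < w!i \<and> w!i < w!j)"

definition N_23_41 :: "nat list \<Rightarrow> nat" where
  "N_23_41 w = pairs2 w (\<lambda>i j. w!(j+1) < w!i \<and> w!i < w!(i+1) \<and> w!(i+1) < w!j)"

definition N_24_31 :: "nat list \<Rightarrow> nat" where
  "N_24_31 w = pairs2 w (\<lambda>i j. w!(j+1) < w!i \<and> w!i < w!j \<and> w!j < w!(i+1))"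

definition N_32_41 :: "nat list \<Rightarrow> nat" where
  "N_32_41 w = pairs2 w (\<lambda>i j. w!(j+1) < w!(i+1) \<and> w!(i+1) < w!i \<and> w!i < w!j)"

end

theory Submission
  imports Defs
begin


definition NECD :: "nat \<Rightarrow> nat \<Rightarrow> nat \<Rightarrow> nat \<Rightarrow> bool" where
 "NECD x X y Y \<longleftrightarrow> (x<y \<and> y<Y \<and> Y<X) \<or> (Y<X \<and> X<x \<and> x<y)"

lemma pt_e2:
  fixes x X y Y :: nat
  assumes "x \<noteq> X" "x \<noteq> y" "x \<noteq> Y" "X \<noteq> y" "X \<noteq> Y" "y \<noteq> Y"
  shows "(of_bool (Y<x \<and> x<X \<and> X<y) + of_bool (Y<x \<and> x<y \<and> y<X) + of_bool (Y<X \<and> X<x \<and> x<y)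
     + of_bool (x<y \<and> y<Y \<and> Y<X) + of_bool (X<Y \<and> Y<y \<and> y<x) - of_bool (y<x \<and> x<Y \<and> Y<X) :: int)
   = of_bool (NECD x X y Y) + of_bool (NECD y Y x X) + of_bool (x<X) * (of_bool (x < y) - of_bool (x < Y))"
  using assms unfolding NECD_def by (cases "x<X"; cases "x<y"; cases "x<Y"; cases "X<y"; cases "X<Y"; cases "y<Y") auto

lemma pt_e1:
  fixes x X y Y :: nat
  assumes "x \<noteq> X" "x \<noteq> y" "x \<noteq> Y" "X \<noteq> y" "X \<noteq> Y" "y \<noteq> Y"
  shows "(of_bool (Y<x \<and> x<y) :: int) = of_bool (Y<x \<and> x<X \<and> X<y) + of_bool (Y<x \<and> x<y \<and> y<X) + of_bool (Y<X \<and> X<x \<and> x<y)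
     + of_bool (X<Y \<and> Y<x \<and> x<y)"
  using assms by (cases "x<X"; cases "x<y"; cases "x<Y"; cases "X<y"; cases "X<Y"; cases "y<Y") auto

lemma card1_sum:
  "int (card {a. a<(N::nat) \<and> P a}) = (\<Sum>a<N. of_bool (P a))"
proof (induction N)
  case 0 then show ?case by simp
next
  case (Suc N)
  have "{a. a<Suc N \<and> P a} = (if P N then insert N {a. a<N \<and> P a} else {a. a<N \<and> P a})"
    by (auto simp: less_Suc_eq)
  then show ?case using Suc by simp
qed

lemma card2_sum:
  "int (card {(a,b). a<(N::nat) \<and> b<N \<and> P a b}) = (\<Sum>a<N. \<Sum>b<N. of_bool (P a b))"
proof -
  have eq: "{(a,b). a<N \<and> b<N \<and> P a b} = {x. x \<in> {..<N} \<times> {..<N} \<and> P (fst x) (snd x)}" by auto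
  have fin: "finite ({..<N} \<times> {..<N})" by (rule finite_cartesian_product) auto
  hence "int (card {(a,b). a<N \<and> b<N \<and> P a b}) = (\<Sum>x\<in>{..<N} \<times> {..<N}. of_bool (P (fst x) (snd x)))"
    using sum.inter_filter[OF fin, of "\<lambda>_. (1::int)" "\<lambda>x. P (fst x) (snd x)"] unfolding eq by (simp add: of_bool_def)
  also have "\<dots> = (\<Sum>a<N. \<Sum>b<N. of_bool (P a b))"
    unfolding sum.cartesian_product by (simp only: split_def)
  finally show ?thesis .
qed

lemma pairs2_sum:
  "int (pairs2 w P) = (\<Sum>a<length w. \<Sum>b<length w. of_bool (a+2\<le>b \<and> b+1<length w \<and> P a b))"
proof -
  have "{(a,b). a + 2 \<le> b \<and> b + 1 < length w \<and> P a b} =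
     {(a,b). a<length w \<and> b<length w \<and> (a+2\<le>b \<and> b+1<length w \<and> P a b)}" by auto
  then show ?thesis unfolding pairs2_def by (simp only: card2_sum)
qed

lemma N231_sum:
  "int (N_231 w) = (\<Sum>a<length w. of_bool (a + 2 < length w \<and> w!(a+2) < w!a \<and> w!a < w!(a+1)))"
proof -
  have "{a. a + 2 < length w \<and> w!(a+2) < w!a \<and> w!a < w!(a+1)} =
     {a. a<length w \<and> (a + 2 < length w \<and> w!(a+2) < w!a \<and> w!a < w!(a+1))}" by auto
  then show ?thesis unfolding N_231_def by (simp only: card1_sum)
qed

lemma N2_31_sum:
  "int (N_2_31 w) = (\<Sum>a<length w. \<Sum>b<length w. of_bool (a < b \<and> b + 1 < length w \<and> w!(b+1) < w!a \<and> w!a < w!b))"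
proof -
  have "{(a,b). a < b \<and> b + 1 < length w \<and> w!(b+1) < w!a \<and> w!a < w!b} =
     {(a,b). a<length w \<and> b<length w \<and> (a < b \<and> b + 1 < length w \<and> w!(b+1) < w!a \<and> w!a < w!b)}" by auto
  then show ?thesis unfolding N_2_31_def by (simp only: card2_sum)
qed

lemma telescope:
  fixes f :: "nat \<Rightarrow> int"
  shows "(\<Sum>b<N. of_bool (a+2\<le>b \<and> b+1<N) * (f b - f (b+1))) = (if a+2 < N then f (a+2) - f (N-1) else 0)"
proof -
  have "(\<Sum>b<N. of_bool (a+2\<le>b \<and> b+1<N) * (f b - f (b+1))) = (\<Sum>b<N. if b \<in> {a+2..<N-1} then f b - f (b+1) else 0)"
    by (rule sum.cong) auto
  also have "\<dots> = (\<Sum>b\<in>{..<N} \<inter> {a+2..<N-1}. f b - f (b+1))"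
    using sum.inter_restrict[of "{..<N}" "\<lambda>b. f b - f (b+1)" "{a+2..<N-1}"] by simp
  also have "{..<N} \<inter> {a+2..<N-1} = {a+2..<N-1}" by auto
  also have "(\<Sum>b\<in>{a+2..<N-1}. f b - f (b+1)) = - (\<Sum>b\<in>{a+2..<N-1}. f (Suc b) - f b)"
    by (simp add: sum_negf[symmetric])
  also have "\<dots> = (if a+2 < N then f (a+2) - f (N-1) else 0)"
  proof (cases "a+2 < N")
    case True
    then have "(\<Sum>b\<in>{a+2..<N-1}. f (Suc b) - f b) = f (N-1) - f (a+2)"
      by (intro sum_Suc_diff') auto
    then show ?thesis using True by simp
  next
    case False then show ?thesis by simp
  qed
  finally show ?thesis .
qed

lemma list_identity:
  fixes w :: "nat list"
  assumes dist: "distinct w" and N1: "1 \<le> length w"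
    and top: "\<And>k. 0<k \<Longrightarrow> k<length w \<Longrightarrow> w!k < w!0"
  defines "N \<equiv> length w"
  defines "s \<equiv> \<lambda>a. if a+1<N then a+1 else 0"
  defines "Q \<equiv> (\<Sum>a<N. \<Sum>b<N. of_bool (NECD (w!a) (w!(s a)) (w!b) (w!(s b))) :: int)"
  shows "int (N_231 w) + int (N_23_41 w) + int (N_24_31 w) + int (N_32_41 w)
              + int (N_14_23 w) + int (N_41_32 w) - int (N_24_13 w) = Q"
    and "int (N_2_31 w) + int (N_14_23 w) + int (N_41_32 w)
              - int (N_24_13 w) - int (N_31_42 w) = Q"
proof -
  have dd: "\<And>i j. i<N \<Longrightarrow> j<N \<Longrightarrow> i \<noteq> j \<Longrightarrow> w!i \<noteq> w!j"
    using dist unfolding N_def by (simp add: nth_eq_iff_index_eq)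
  define R where "R \<equiv> \<lambda>a b. a+2\<le>b \<and> b+1<N"
  define g where "g \<equiv> \<lambda>a. (of_bool (a + 2 < N \<and> w!(a+2) < w!a \<and> w!a < w!(a+1)) :: int)"
  define E where "E \<equiv> \<lambda>a b. (of_bool (R a b \<and> w!(b+1) < w!a \<and> w!a < w!(a+1) \<and> w!(a+1) < w!b) :: int)"
  define F where "F \<equiv> \<lambda>a b. (of_bool (R a b \<and> w!(b+1) < w!a \<and> w!a < w!b \<and> w!b < w!(a+1)) :: int)"
  define G where "G \<equiv> \<lambda>a b. (of_bool (R a b \<and> w!(b+1) < w!(a+1) \<and> w!(a+1) < w!a \<and> w!a < w!b) :: int)"
  define A where "A \<equiv> \<lambda>a b. (of_bool (R a b \<and> w!a < w!b \<and> w!b < w!(b+1) \<and> w!(b+1) < w!(a+1)) :: int)"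
  define B where "B \<equiv> \<lambda>a b. (of_bool (R a b \<and> w!(a+1) < w!(b+1) \<and> w!(b+1) < w!b \<and> w!b < w!a) :: int)"
  define C where "C \<equiv> \<lambda>a b. (of_bool (R a b \<and> w!b < w!a \<and> w!a < w!(b+1) \<and> w!(b+1) < w!(a+1)) :: int)"
  define D where "D \<equiv> \<lambda>a b. (of_bool (R a b \<and> w!(a+1) < w!(b+1) \<and> w!(b+1) < w!a \<and> w!a < w!b) :: int)"
  define q1 where "q1 \<equiv> \<lambda>a b. (of_bool (R a b \<and> NECD (w!a) (w!(a+1)) (w!b) (w!(b+1))) :: int)"
  define q2 where "q2 \<equiv> \<lambda>a b. (of_bool (R a b \<and> NECD (w!b) (w!(b+1)) (w!a) (w!(a+1))) :: int)"
  define qw where "qw \<equiv> \<lambda>a. (of_bool (a+1<N \<and> w!(N-1) < w!a \<and> w!a < w!(a+1)) :: int)"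
  have cnt: "int (N_231 w) = (\<Sum>a<N. g a)"
    "int (N_23_41 w) = (\<Sum>a<N. \<Sum>b<N. E a b)"
    "int (N_24_31 w) = (\<Sum>a<N. \<Sum>b<N. F a b)"
    "int (N_32_41 w) = (\<Sum>a<N. \<Sum>b<N. G a b)"
    "int (N_14_23 w) = (\<Sum>a<N. \<Sum>b<N. A a b)"
    "int (N_41_32 w) = (\<Sum>a<N. \<Sum>b<N. B a b)"
    "int (N_24_13 w) = (\<Sum>a<N. \<Sum>b<N. C a b)"
    "int (N_31_42 w) = (\<Sum>a<N. \<Sum>b<N. D a b)"
    unfolding N231_sum N_23_41_def N_24_31_def N_32_41_def N_14_23_def N_41_32_def N_24_13_def N_31_42_def
      pairs2_sum g_def E_def F_def G_def A_def B_def C_def D_def R_def N_def by (simp_all add: conj_assoc)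
  have pera: "g a + (\<Sum>b<N. E a b + F a b + G a b + A a b + B a b - C a b) = (\<Sum>b<N. q1 a b + q2 a b) + qw a"
    if aN: "a < N" for a
  proof -
    define gg where "gg \<equiv> \<lambda>b. (of_bool (w!a < w!b) :: int)"
    have pt: "E a b + F a b + G a b + A a b + B a b - C a b = q1 a b + q2 a b
        + of_bool (a+1<N \<and> w!a < w!(a+1)) * (of_bool (R a b) * (gg b - gg (b+1)))" if bN: "b<N" for b
    proof (cases "R a b")
      case True
      then have "a+2 \<le> b" "b+1<N" unfolding R_def by auto
      then have ne: "w!a \<noteq> w!(a+1)" "w!a \<noteq> w!b" "w!a \<noteq> w!(b+1)" "w!(a+1) \<noteq> w!b" "w!(a+1) \<noteq> w!(b+1)" "w!b \<noteq> w!(b+1)"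
        using dd[of a "a+1"] dd[of a b] dd[of a "b+1"] dd[of "a+1" b] dd[of "a+1" "b+1"] dd[of b "b+1"] by auto
      show ?thesis using pt_e2[OF ne] True \<open>b+1<N\<close> \<open>a+2 \<le> b\<close>
        unfolding E_def F_def G_def A_def B_def C_def q1_def q2_def gg_def by simp
    next
      case False then show ?thesis unfolding E_def F_def G_def A_def B_def C_def q1_def q2_def gg_def by simp
    qed
    have "(\<Sum>b<N. E a b + F a b + G a b + A a b + B a b - C a b) = (\<Sum>b<N. q1 a b + q2 a b
        + of_bool (a+1<N \<and> w!a < w!(a+1)) * (of_bool (R a b) * (gg b - gg (b+1))))"
      using pt by (rule sum.cong[OF refl]) simp
    also have "\<dots> = (\<Sum>b<N. q1 a b + q2 a b) + of_bool (a+1<N \<and> w!a < w!(a+1)) * (\<Sum>b<N. of_bool (R a b) * (gg b - gg (b+1)))"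
      by (simp add: sum.distrib sum_distrib_left)
    also have "(\<Sum>b<N. of_bool (R a b) * (gg b - gg (b+1))) = (if a+2 < N then gg (a+2) - gg (N-1) else 0)"
      unfolding R_def by (rule telescope)
    finally have eq: "(\<Sum>b<N. E a b + F a b + G a b + A a b + B a b - C a b) = (\<Sum>b<N. q1 a b + q2 a b)
       + of_bool (a+1<N \<and> w!a < w!(a+1)) * (if a+2 < N then gg (a+2) - gg (N-1) else 0)" .
    have "g a + of_bool (a+1<N \<and> w!a < w!(a+1)) * (if a+2 < N then gg (a+2) - gg (N-1) else 0) = qw a"
    proof (cases "a+2<N")
      case True
      have ne: "w!(a+2) \<noteq> w!a" "w!(N-1) \<noteq> w!a" using True dd[of "a+2" a] dd[of "N-1" a] by auto
      show ?thesis using True ne unfolding g_def gg_def qw_def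
        by (cases "w!a < w!(a+1)"; cases "w!(a+2) < w!a"; cases "w!(N-1) < w!a") auto
    next
      case False
      then have "a+1 = N \<or> a+2 = N" using aN by auto
      then show ?thesis unfolding g_def gg_def qw_def using False by auto
    qed
    with eq show ?thesis by simp
  qed
  have e2: "int (N_231 w) + int (N_23_41 w) + int (N_24_31 w) + int (N_32_41 w)
              + int (N_14_23 w) + int (N_41_32 w) - int (N_24_13 w)
      = (\<Sum>a<N. g a + (\<Sum>b<N. E a b + F a b + G a b + A a b + B a b - C a b))"
    unfolding cnt by (simp add: sum.distrib sum_subtractf)
  also have "\<dots> = (\<Sum>a<N. (\<Sum>b<N. q1 a b + q2 a b) + qw a)"
    by (rule sum.cong[OF refl]) (simp add: pera)
  also have "\<dots> = Q"
  proof -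
    have pq: "of_bool (NECD (w!a) (w!(s a)) (w!b) (w!(s b))) = q1 a b + q2 b a + of_bool (a = N-1) * qw b"
      if aN: "a<N" and bN: "b<N" for a b
    proof -
      consider "R a b" | "R b a" | "a = N-1" | "b = N-1" "a \<noteq> N-1"
        | "a+1<N" "b+1<N" "a = b \<or> b = a+1 \<or> a = b+1"
        using aN bN unfolding R_def by linarith
      then show ?thesis
      proof cases
        case 1
        then have "a+1<N" "b+1<N" "a \<noteq> N-1" "\<not> R b a" unfolding R_def by auto
        then show ?thesis using 1 unfolding q1_def q2_def s_def by simp
      next
        case 2
        then have "a+1<N" "b+1<N" "a \<noteq> N-1" "\<not> R a b" unfolding R_def by auto
        then show ?thesis using 2 unfolding q1_def q2_def s_def by simp
      next
        case 3
        then have nR: "\<not> R a b" "\<not> R b a" unfolding R_def by auto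
        have sa: "s a = 0" using 3 aN unfolding s_def by auto
        show ?thesis
        proof (cases "b = N-1")
          case True
          then show ?thesis using 3 nR sa unfolding q1_def q2_def qw_def NECD_def by auto
        next
          case False
          then have b1: "b+1<N" using bN by auto
          have t1: "w!(b+1) < w!0" using top b1 unfolding N_def by auto
          have t2: "w!(N-1) < w!0" using top b1 3 unfolding N_def by auto
          show ?thesis using 3 nR sa b1 t1 t2 unfolding q1_def q2_def qw_def NECD_def s_def by auto
        qed
      next
        case 4
        then have nR: "\<not> R a b" "\<not> R b a" unfolding R_def by auto
        have sb: "s b = 0" using 4 bN unfolding s_def by auto
        have "w!(s a) \<le> w!0" using top[of "s a"] aN unfolding s_def N_def by (cases "s a = 0") (auto simp: s_def)
        then show ?thesis using 4 nR sb unfolding q1_def q2_def qw_def NECD_def by auto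
      next
        case 5
        then have nR: "\<not> R a b" "\<not> R b a" "a \<noteq> N-1" unfolding R_def by auto
        have "\<not> NECD (w!a) (w!(s a)) (w!b) (w!(s b))"
          using 5 unfolding NECD_def s_def by auto
        then show ?thesis using nR unfolding q1_def q2_def by simp
      qed
    qed
    have "Q = (\<Sum>a<N. \<Sum>b<N. q1 a b + q2 b a + of_bool (a = N-1) * qw b)"
      unfolding Q_def by (intro sum.cong refl) (simp add: pq)
    also have "\<dots> = (\<Sum>a<N. \<Sum>b<N. q1 a b) + (\<Sum>a<N. \<Sum>b<N. q2 b a) + (\<Sum>a<N. \<Sum>b<N. of_bool (a = N-1) * qw b)"
      by (simp add: sum.distrib)
    also have "(\<Sum>a<N. \<Sum>b<N. q2 b a) = (\<Sum>a<N. \<Sum>b<N. q2 a b)"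
      by (rule sum.swap)
    also have "(\<Sum>a<N. \<Sum>b<N. of_bool (a = N-1) * qw b) = (\<Sum>b<N. \<Sum>a<N. of_bool (a = N-1) * qw b)"
      by (rule sum.swap)
    also have "\<dots> = (\<Sum>b<N. qw b)"
    proof (rule sum.cong[OF refl])
      fix b
      have "(\<Sum>a<N. of_bool (a = N-1) * qw b) = (\<Sum>a<N. if a = N-1 then qw b else 0)"
        by (rule sum.cong) auto
      also have "\<dots> = qw b" using N1 unfolding N_def by (simp add: sum.delta) linarith
      finally show "(\<Sum>a<N. of_bool (a = N-1) * qw b) = qw b" .
    qed
    finally show ?thesis by (simp add: sum.distrib)
  qed
  finally show e2': "int (N_231 w) + int (N_23_41 w) + int (N_24_31 w) + int (N_32_41 w)
              + int (N_14_23 w) + int (N_41_32 w) - int (N_24_13 w) = Q" .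
  have p231: "of_bool (a < b \<and> b + 1 < N \<and> w!(b+1) < w!a \<and> w!a < w!b)
      = (if b = a+1 then g a else 0) + E a b + F a b + G a b + D a b" if aN: "a<N" and bN: "b<N" for a b
  proof (cases "R a b")
    case True
    then have "a+2 \<le> b" "b+1<N" unfolding R_def by auto
    then have ne: "w!a \<noteq> w!(a+1)" "w!a \<noteq> w!b" "w!a \<noteq> w!(b+1)" "w!(a+1) \<noteq> w!b" "w!(a+1) \<noteq> w!(b+1)" "w!b \<noteq> w!(b+1)"
      using dd[of a "a+1"] dd[of a b] dd[of a "b+1"] dd[of "a+1" b] dd[of "a+1" "b+1"] dd[of b "b+1"] by auto
    show ?thesis using pt_e1[OF ne] True \<open>b+1<N\<close> \<open>a+2 \<le> b\<close>
      unfolding E_def F_def G_def D_def by simp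
  next
    case False
    then show ?thesis unfolding E_def F_def G_def D_def g_def R_def
      by (cases "b = a+1") (auto simp: add.assoc)
  qed
  have "int (N_2_31 w) = (\<Sum>a<N. \<Sum>b<N. (if b = a+1 then g a else 0) + E a b + F a b + G a b + D a b)"
    unfolding N2_31_sum N_def[symmetric] apply (intro sum.cong refl) apply (rule p231) by auto
  also have "\<dots> = (\<Sum>a<N. \<Sum>b<N. if b = a+1 then g a else 0) + (\<Sum>a<N. \<Sum>b<N. E a b) + (\<Sum>a<N. \<Sum>b<N. F a b)
     + (\<Sum>a<N. \<Sum>b<N. G a b) + (\<Sum>a<N. \<Sum>b<N. D a b)"
    by (simp add: sum.distrib)
  also have "(\<Sum>a<N. \<Sum>b<N. if b = a+1 then g a else 0) = (\<Sum>a<N. g a)"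
  proof (rule sum.cong[OF refl])
    fix a assume "a \<in> {..<N}"
    show "(\<Sum>b<N. if b = a+1 then g a else 0) = g a"
      by (cases "a+1 < N") (auto simp: sum.delta' g_def)
  qed
  finally have "int (N_2_31 w) = (\<Sum>a<N. g a) + (\<Sum>a<N. \<Sum>b<N. E a b) + (\<Sum>a<N. \<Sum>b<N. F a b)
     + (\<Sum>a<N. \<Sum>b<N. G a b) + (\<Sum>a<N. \<Sum>b<N. D a b)" .
  then show "int (N_2_31 w) + int (N_14_23 w) + int (N_41_32 w)
              - int (N_24_13 w) - int (N_31_42 w) = Q"
    using e2' unfolding cnt by linarith
qed



lemma perm_self:
  assumes "p permutes {1..(n::nat)}"
  obtains j where "j > 0" "(p ^^ j) x = x"
  using permutation_self[OF permutes_imp_permutation[OF _ assms]] by auto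

lemma reach_back:
  assumes perm: "p permutes {1..(n::nat)}" and k: "(p ^^ k) x = y"
  shows "\<exists>t. (p ^^ t) y = x"
proof -
  obtain j where j: "j > 0" "(p ^^ j) x = x" using perm_self[OF perm] by blast
  have jj: "(p ^^ (j*k)) x = x"
  proof -
    have "((p ^^ j) ^^ k) x = x" by (induction k) (simp_all add: j)
    then show ?thesis by (simp add: funpow_mult)
  qed
  have "k \<le> j*k" using j by simp
  have "(p ^^ (j*k - k + k)) x = (p ^^ (j*k - k)) ((p ^^ k) x)" by (simp add: funpow_add)
  then have "(p ^^ (j*k - k)) y = (p ^^ (j*k - k + k)) x" using k by simp
  also have "j*k - k + k = j*k" using \<open>k \<le> j*k\<close> by simp
  finally show ?thesis using jj by auto
qed

lemma cyc_len_props: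
  assumes perm: "p permutes {1..(n::nat)}"
  shows "0 < cyc_len p x" "(p ^^ cyc_len p x) x = x" "\<And>k. 0 < k \<Longrightarrow> k < cyc_len p x \<Longrightarrow> (p ^^ k) x \<noteq> x"
proof -
  obtain j where j: "j > 0" "(p ^^ j) x = x" using perm_self[OF perm] by blast
  have ex: "\<exists>k. 0 < k \<and> (p ^^ k) x = x" using j by blast
  show "0 < cyc_len p x" "(p ^^ cyc_len p x) x = x"
    using LeastI_ex[OF ex] unfolding cyc_len_def by auto
  show "\<And>k. 0 < k \<Longrightarrow> k < cyc_len p x \<Longrightarrow> (p ^^ k) x \<noteq> x"
    using not_less_Least unfolding cyc_len_def by blast
qed

lemma theta_head:
  assumes perm: "p permutes {1..(n::nat)}" and n1: "1 \<le> n"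
  shows "theta n p ! 0 = Min (cycle_maxima n p)"
proof -
  let ?M = "cycle_maxima n p"
  have fin: "finite ?M" unfolding cycle_maxima_def by simp
  have "n \<in> ?M" unfolding cycle_maxima_def using n1 permutes_in_funpow_image[OF perm, of n] by auto
  then have ne: "?M \<noteq> {}" by auto
  have "cyc_len p (Min ?M) > 0" using cyc_len_props[OF perm] by blast
  then have "cycle_list p (Min ?M) = Min ?M # tl (cycle_list p (Min ?M))"
    unfolding cycle_list_def by (simp add: upt_conv_Cons)
  then show ?thesis unfolding theta_def sorted_list_of_set_nonempty[OF fin ne]
    by (metis concat.simps(2) list.simps(9) append_Cons nth_Cons_0)
qed

lemma cyclic_maxima:
  assumes perm: "p permutes {1..(n::nat)}" and n1: "1 \<le> n"
  shows "cyclic_perm n p \<longleftrightarrow> cycle_maxima n p = {n}"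
proof
  assume cyc: "cyclic_perm n p"
  show "cycle_maxima n p = {n}"
  proof
    show "cycle_maxima n p \<subseteq> {n}"
    proof
      fix m assume m: "m \<in> cycle_maxima n p"
      then have m1: "m \<in> {1..n}" "\<forall>k. (p ^^ k) m \<le> m" unfolding cycle_maxima_def by auto
      have all: "\<forall>x\<in>{1..n}. \<forall>y\<in>{1..n}. \<exists>k. (p^^k) x = y" using cyc unfolding cyclic_perm_def by blast
      obtain k where "(p ^^ k) m = n" using bspec[OF bspec[OF all m1(1)], of n] n1 by auto
      then show "m \<in> {n}" using m1 by (metis atLeastAtMost_iff le_antisym singletonI)
    qed
    show "{n} \<subseteq> cycle_maxima n p"
      unfolding cycle_maxima_def using n1 permutes_in_funpow_image[OF perm, of n] by auto
  qed
next
  assume M: "cycle_maxima n p = {n}"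
  have reachn: "\<exists>k. (p ^^ k) x = n" if x: "x \<in> {1..n}" for x
  proof -
    define Orb where "Orb = {(p ^^ k) x | k. True}"
    have Osub: "Orb \<subseteq> {1..n}" unfolding Orb_def using permutes_in_funpow_image[OF perm x] by auto
    then have finO: "finite Orb" by (rule finite_subset) simp
    have "x \<in> Orb" unfolding Orb_def by (auto intro: exI[of _ 0])
    then have "Max Orb \<in> Orb" using finO Max_in by blast
    then obtain k0 where k0: "(p ^^ k0) x = Max Orb" unfolding Orb_def by auto
    have "\<forall>k. (p ^^ k) (Max Orb) \<le> Max Orb"
    proof
      fix k
      have "(p ^^ k) (Max Orb) = (p ^^ (k + k0)) x" using k0 by (simp add: funpow_add)
      then have "(p ^^ k) (Max Orb) \<in> Orb" unfolding Orb_def by auto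
      then show "(p ^^ k) (Max Orb) \<le> Max Orb" using finO by simp
    qed
    moreover have "Max Orb \<in> {1..n}" using \<open>Max Orb \<in> Orb\<close> Osub by auto
    ultimately have "Max Orb \<in> cycle_maxima n p" unfolding cycle_maxima_def by auto
    then have "Max Orb = n" using M by auto
    then show ?thesis using k0 by auto
  qed
  show "cyclic_perm n p" unfolding cyclic_perm_def
  proof (intro conjI perm ballI)
    fix x y assume x: "x \<in> {1..n}" and y: "y \<in> {1..n}"
    obtain k where k: "(p ^^ k) x = n" using reachn[OF x] by auto
    obtain k' where k': "(p ^^ k') y = n" using reachn[OF y] by auto
    obtain t where t: "(p ^^ t) n = y" using reach_back[OF perm k'] by auto
    have "(p ^^ (t + k)) x = y" using k t by (simp add: funpow_add)
    then show "\<exists>k. (p ^^ k) x = y" by blast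
  qed
qed

lemma cyclic_theta:
  assumes perm: "p permutes {1..(n::nat)}" and n1: "1 \<le> n" and cyc: "cyclic_perm n p"
  shows "theta n p = map (\<lambda>k. (p ^^ k) n) [0..<n]"
    and "inj_on (\<lambda>k. (p ^^ k) n) {..<n}"
    and "(\<lambda>k. (p ^^ k) n) ` {..<n} = {1..n}"
    and "(p ^^ n) n = n"
proof -
  let ?L = "cyc_len p n"
  let ?f = "\<lambda>k. (p ^^ k) n"
  note cl = cyc_len_props[OF perm, where x=n]
  have injp: "inj p" using perm by (rule permutes_inj)
  have per: "?f k = ?f (k mod ?L)" for k
  proof -
    have "((p ^^ ?L) ^^ q) n = n" for q by (induction q) (simp_all add: cl(2))
    then have "((p ^^ ?L) ^^ (k div ?L)) n = n" by blast
    then have "(p ^^ (?L * (k div ?L))) n = n" by (simp add: funpow_mult)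
    then have "(p ^^ (k mod ?L)) ((p ^^ (?L * (k div ?L))) n) = ?f (k mod ?L)" by simp
    moreover have "(p ^^ (k mod ?L)) ((p ^^ (?L * (k div ?L))) n) = (p ^^ (k mod ?L + ?L * (k div ?L))) n"
      by (simp only: funpow_add comp_apply)
    moreover have "k mod ?L + ?L * (k div ?L) = k" by simp
    ultimately show ?thesis by metis
  qed
  have inj: "inj_on ?f {..<?L}"
  proof (rule inj_onI)
    fix i j assume i: "i \<in> {..<?L}" and j: "j \<in> {..<?L}" and eq: "?f i = ?f j"
    show "i = j"
    proof (rule ccontr)
      assume "i \<noteq> j"
      then consider "i < j" | "j < i" by linarith
      then show False
      proof cases
        case 1
        have "(p ^^ i) ((p ^^ (j - i)) n) = (p ^^ (i + (j - i))) n" by (simp only: funpow_add comp_apply)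
        also have "i + (j - i) = j" using 1 by simp
        finally have "(p ^^ i) ((p ^^ (j - i)) n) = (p ^^ i) n" using eq by simp
        then have "(p ^^ (j - i)) n = n" using inj_fn[OF injp, of i] by (simp add: inj_eq)
        moreover have "j - i < ?L" "0 < j - i" using 1 j by auto
        ultimately show False using cl(3)[of "j-i"] by blast
      next
        case 2
        have "(p ^^ j) ((p ^^ (i - j)) n) = (p ^^ (j + (i - j))) n" by (simp only: funpow_add comp_apply)
        also have "j + (i - j) = i" using 2 by simp
        finally have "(p ^^ j) ((p ^^ (i - j)) n) = (p ^^ j) n" using eq by simp
        then have "(p ^^ (i - j)) n = n" using inj_fn[OF injp, of j] by (simp add: inj_eq)
        moreover have "i - j < ?L" "0 < i - j" using 2 i by auto
        ultimately show False using cl(3)[of "i-j"] by blast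
      qed
    qed
  qed
  have img: "?f ` {..<?L} = {1..n}"
  proof
    show "?f ` {..<?L} \<subseteq> {1..n}" using permutes_in_funpow_image[OF perm, of n] n1 by auto
    show "{1..n} \<subseteq> ?f ` {..<?L}"
    proof
      fix y assume y: "y \<in> {1..n}"
      have all: "\<forall>x\<in>{1..n}. \<forall>y\<in>{1..n}. \<exists>k. (p^^k) x = y" using cyc unfolding cyclic_perm_def by blast
      obtain k where "?f k = y" using bspec[OF bspec[OF all, of n] y] n1 by auto
      then have "?f (k mod ?L) = y" using per by metis
      moreover have "k mod ?L < ?L" using cl(1) by simp
      ultimately show "y \<in> ?f ` {..<?L}" by blast
    qed
  qed
  have L: "?L = n"
  proof -
    have "card (?f ` {..<?L}) = ?L" using card_image[OF inj] by simp
    then show ?thesis using img by simp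
  qed
  show "theta n p = map ?f [0..<n]"
  proof -
    have "cycle_maxima n p = {n}" using cyclic_maxima[OF perm n1] cyc by simp
    then show ?thesis unfolding theta_def cycle_list_def using L by simp
  qed
  show "inj_on ?f {..<n}" using inj L by simp
  show "?f ` {..<n} = {1..n}" using img L by simp
  show "(p ^^ n) n = n" using cl(2) L by simp
qed

lemma c321:
  assumes perm: "p permutes {1..(n::nat)}" and nofix: "\<And>x. x \<in> {1..n} \<Longrightarrow> p x \<noteq> x"
  shows "contains_321 n p \<longleftrightarrow> (\<exists>x\<in>{1..n}. \<exists>y\<in>{1..n}. NECD x (p x) y (p y))"
proof
  assume "contains_321 n p"
  then obtain i j k where ijk: "1 \<le> i" "i < j" "j < k" "k \<le> n" "p i > p j" "p j > p k"
    unfolding contains_321_def by blast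
  have "p j \<noteq> j" using nofix ijk by auto
  then consider "p j > j" | "p j < j" by linarith
  then show "\<exists>x\<in>{1..n}. \<exists>y\<in>{1..n}. NECD x (p x) y (p y)"
  proof cases
    case 1 then have "NECD i (p i) j (p j)" using ijk unfolding NECD_def by auto
    then show ?thesis using ijk by force
  next
    case 2 then have "NECD j (p j) k (p k)" using ijk unfolding NECD_def by auto
    then show ?thesis using ijk by force
  qed
next
  assume "\<exists>x\<in>{1..n}. \<exists>y\<in>{1..n}. NECD x (p x) y (p y)"
  then obtain x y where xy: "x \<in> {1..n}" "y \<in> {1..n}" and nc: "NECD x (p x) y (p y)" by blast
  have inj: "inj p" using perm by (rule permutes_inj)
  have pin: "\<And>z. z \<in> {1..n} \<Longrightarrow> p z \<in> {1..n}" using permutes_in_image[OF perm] by blast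
  consider "x<y" "y<p y" "p y<p x" | "p y<p x" "p x<x" "x<y" using nc unfolding NECD_def by blast
  then show "contains_321 n p"
  proof cases
    case 1
    have "\<exists>z. y < z \<and> z \<le> n \<and> p z < p y"
    proof (rule ccontr)
      assume "\<not> ?thesis"
      then have "p ` {y..n} \<subseteq> {p y..n}" using pin xy by (auto simp: not_less)
      then have "card (p ` {y..n}) \<le> card {p y..n}" by (intro card_mono) auto
      moreover have "card (p ` {y..n}) = card {y..n}" using inj by (simp add: card_image inj_on_subset)
      ultimately show False using 1 pin[OF xy(2)] by simp
    qed
    then obtain z where "y < z" "z \<le> n" "p z < p y" by blast
    then show ?thesis unfolding contains_321_def using 1 xy by (intro exI[of _ x] exI[of _ y] exI[of _ z]) auto
  next
    case 2
    have "\<exists>z. 1 \<le> z \<and> z < x \<and> p z > p x"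
    proof (rule ccontr)
      assume "\<not> ?thesis"
      then have "p ` {1..x} \<subseteq> {1..p x}" using pin xy by (fastforce simp: not_less)
      then have "card (p ` {1..x}) \<le> card {1..p x}" by (intro card_mono) auto
      moreover have "card (p ` {1..x}) = card {1..x}" using inj by (simp add: card_image inj_on_subset)
      ultimately show False using 2 by simp
    qed
    then obtain z where "1 \<le> z" "z < x" "p z > p x" by blast
    then show ?thesis unfolding contains_321_def using 2 xy by (intro exI[of _ z] exI[of _ x] exI[of _ y]) auto
  qed
qed



theorem mainTheorem3:
  fixes n :: nat and p :: "nat \<Rightarrow> nat"
  assumes "n \<ge> 1" and "p permutes {1..n}"
  defines "w \<equiv> theta n p"
  shows "((cyclic_perm n p \<and> \<not> contains_321 n p) \<longleftrightarrow>
           (w ! 0 = n \<and>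
            int (N_2_31 w) + int (N_14_23 w) + int (N_41_32 w)
              - int (N_24_13 w) - int (N_31_42 w) = 0))
       \<and> ((cyclic_perm n p \<and> \<not> contains_321 n p) \<longleftrightarrow>
           (w ! 0 = n \<and>
            int (N_231 w) + int (N_23_41 w) + int (N_24_31 w) + int (N_32_41 w)
              + int (N_14_23 w) + int (N_41_32 w) - int (N_24_13 w) = 0))"
proof -
  note n1 = assms(1) and perm = assms(2)
  have head: "w!0 = Min (cycle_maxima n p)" unfolding w_def by (rule theta_head[OF perm n1])
  show ?thesis
  proof (cases "cyclic_perm n p")
    case False
    have "w!0 \<noteq> n"
    proof
      assume "w!0 = n"
      then have mn: "Min (cycle_maxima n p) = n" using head by simp
      have fin: "finite (cycle_maxima n p)" unfolding cycle_maxima_def by simp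
      have nin: "n \<in> cycle_maxima n p"
        unfolding cycle_maxima_def using n1 permutes_in_funpow_image[OF perm, of n] by auto
      have "cycle_maxima n p = {n}"
      proof
        show "cycle_maxima n p \<subseteq> {n}"
        proof
          fix m assume m: "m \<in> cycle_maxima n p"
          then have "n \<le> m" using mn fin Min_le by metis
          moreover have "m \<le> n" using m unfolding cycle_maxima_def by auto
          ultimately show "m \<in> {n}" by simp
        qed
        show "{n} \<subseteq> cycle_maxima n p" using nin by simp
      qed
      then show False using False cyclic_maxima[OF perm n1] by simp
    qed
    then show ?thesis using False by simp
  next
    case True
    define f where "f = (\<lambda>k. (p ^^ k) n)"
    note ct = cyclic_theta[OF perm n1 True, folded f_def]
    have wf: "w = map f [0..<n]" unfolding w_def by (rule ct(1))
    have len: "length w = n" using wf by simp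
    have wn: "\<And>k. k < n \<Longrightarrow> w!k = f k" using wf by simp
    have injf: "inj_on f {..<n}" by (rule ct(2))
    have dist: "distinct w" unfolding wf using injf by (simp add: distinct_map lessThan_atLeast0)
    have f0: "f 0 = n" unfolding f_def by simp
    have frange: "\<And>k. k < n \<Longrightarrow> f k \<in> {1..n}" using ct(3) by blast
    have top: "w!k < w!0" if "0<k" "k<length w" for k
    proof -
      have "f k \<noteq> f 0" using injf that len by (auto dest: inj_onD)
      then show ?thesis using frange[of k] that len wn[of k] wn[of 0] f0 by auto
    qed
    define s where "s \<equiv> \<lambda>a. if a+1<length w then a+1 else 0"
    define Q where "Q \<equiv> (\<Sum>a<length w. \<Sum>b<length w. of_bool (NECD (w!a) (w!(s a)) (w!b) (w!(s b))) :: int)"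
    have len1: "1 \<le> length w" using len n1 by simp
    have e2: "int (N_231 w) + int (N_23_41 w) + int (N_24_31 w) + int (N_32_41 w)
              + int (N_14_23 w) + int (N_41_32 w) - int (N_24_13 w) = Q"
      unfolding Q_def s_def by (rule list_identity(1)[OF dist len1 top])
    have e1: "int (N_2_31 w) + int (N_14_23 w) + int (N_41_32 w)
              - int (N_24_13 w) - int (N_31_42 w) = Q"
      unfolding Q_def s_def by (rule list_identity(2)[OF dist len1 top])
    have ws: "w!(s a) = p (f a)" if a: "a < n" for a
    proof (cases "a+1<n")
      case True
      then show ?thesis unfolding s_def using len wn[of "a+1"] by (simp add: f_def)
    next
      case False
      then have "a = n - 1" using a by simp
      then have "p (f a) = (p ^^ n) n" unfolding f_def using n1
        by (metis Suc_diff_1 comp_apply funpow.simps(2) less_le_trans zero_less_one)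
      then show ?thesis unfolding s_def using False len wn[of 0] f0 ct(4) n1 by simp
    qed
    have Qf: "Q = (\<Sum>a<n. \<Sum>b<n. of_bool (NECD (f a) (p (f a)) (f b) (p (f b))))"
      unfolding Q_def len by (intro sum.cong refl) (simp add: ws wn)
    have "Q = 0 \<longleftrightarrow> (\<forall>a<n. \<forall>b<n. \<not> NECD (f a) (p (f a)) (f b) (p (f b)))"
      unfolding Qf by (simp add: sum_nonneg_eq_0_iff sum_nonneg) blast
    also have "\<dots> \<longleftrightarrow> (\<forall>x\<in>{1..n}. \<forall>y\<in>{1..n}. \<not> NECD x (p x) y (p y))"
    proof
      assume H: "\<forall>a<n. \<forall>b<n. \<not> NECD (f a) (p (f a)) (f b) (p (f b))"
      show "\<forall>x\<in>{1..n}. \<forall>y\<in>{1..n}. \<not> NECD x (p x) y (p y)"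
      proof (intro ballI)
        fix x y assume x: "x \<in> {1..n}" and y: "y \<in> {1..n}"
        obtain a where a: "a < n" "x = f a" using x ct(3) by (metis imageE lessThan_iff)
        obtain b where b: "b < n" "y = f b" using y ct(3) by (metis imageE lessThan_iff)
        show "\<not> NECD x (p x) y (p y)" using H a b by blast
      qed
    next
      assume H: "\<forall>x\<in>{1..n}. \<forall>y\<in>{1..n}. \<not> NECD x (p x) y (p y)"
      show "\<forall>a<n. \<forall>b<n. \<not> NECD (f a) (p (f a)) (f b) (p (f b))"
        using H frange by blast
    qed
    also have "\<dots> \<longleftrightarrow> \<not> contains_321 n p"
    proof (cases "n = 1")
      case True
      then show ?thesis unfolding contains_321_def NECD_def by auto
    next
      case False
      have nofix: "p x \<noteq> x" if x: "x \<in> {1..n}" for x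
      proof
        assume px: "p x = x"
        have it: "(p ^^ k) x = x" for k by (induction k) (simp_all add: px)
        obtain y where y: "y \<in> {1..n}" "y \<noteq> x" using False n1 x
          by (metis atLeastAtMost_iff le_refl order.trans nat_le_linear)
        have all: "\<forall>x\<in>{1..n}. \<forall>y\<in>{1..n}. \<exists>k. (p^^k) x = y" using True unfolding cyclic_perm_def by blast
        obtain k where "(p ^^ k) x = y" using bspec[OF bspec[OF all x] y(1)] by blast
        then show False using it y by simp
      qed
      show ?thesis using c321[OF perm nofix] by blast
    qed
    finally have Qiff: "Q = 0 \<longleftrightarrow> \<not> contains_321 n p" .
    have w0: "w!0 = n" using wn[of 0] f0 n1 by simp
    show ?thesis using e1 e2 Qiff w0 True by simp
  qed
qed

end
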